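(* Let $f:H\to\mathbb{R}\cup\{+\infty\}$ be proper lower semicontinuous with the K\L{} property at $x^*$ with desingularizing function $\varphi:[0,\eta[\to[0,\infty[$, the K\L{} inequality holding on $\Gamma_\eta(x^*,\delta)$. Let $(x^k)$ satisfy $\mathbf{H}_1$ and $\mathbf{H}_2$, and fix $k\ge1$. If $x^k$ and $x^{k+1}$ belong to $\underline{\Gamma}_\eta(x^*,\delta)$, then $$2\|x^{k+1}-x^k\|\le\|x^k-x^{k-1}\|+\frac{1}{a_kb_k}\big[\varphi(f(x^k)-f(x^* ))-\varphi(f(x^{k+1})-f(x^* ))\big]+\varepsilon_k.$$
   Context: Lazy slope $\|\partial f(x)\|_-=\inf_{p\in\partial f(x)}\|p\|$ ($+\infty$ if empty), $\partial f$ the limiting Fréchet subdifferential. Desingularizing function: continuous concave $\varphi:[0,\eta[\to[0,\infty[$, $\varphi(0)=0$, $C^1$ on $]0,\eta[$ with $\varphi'>0$. K\L{} inequality on $\Gamma_\eta(x^*,\delta)=\{x:\|x-x^*\|<\delta,\ f(x^* )<f(x)<f(x^* )+\eta\}$: $\varphi'(f(x)-f(x^* ))\|\partial f(x)\|_-\ge1$. $\underline{\Gamma}_\eta(x^*,\delta)=\{x:\|x-x^*\|<\delta,\ f(x^* )\le f(x)<f(x^* )+\eta\}$. $\mathbf{H}_1$: for each $k$, $f(x^{k+1})+a_k\|x^{k+1}-x^k\|^2\le f(x^k)$, $a_k>0$. $\mathbf{H}_2$: for each $k$, $b_{k+1}\|\partial f(x^{k+1})\|_-\le\|x^{k+1}-x^k\|+\varepsilon_{k+1}$,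 $b_{k+1}>0$, $\varepsilon_{k+1}\ge0$. *)

theory Defs
  imports "HOL-Analysis.Analysis"
begin

text \<open>Functions H -> R \<union> {+\<infinity>} are modelled as functions into ereal never taking -\<infinity>.\<close>

definition proper_fun :: "('a \<Rightarrow> ereal) \<Rightarrow> bool" where
  "proper_fun f \<longleftrightarrow> (\<exists>x. f x \<noteq> \<infinity>) \<and> (\<forall>x. f x \<noteq> -\<infinity>)"

definition lsc_fun :: "('a::topological_space \<Rightarrow> ereal) \<Rightarrow> bool" where
  "lsc_fun f \<longleftrightarrow> (\<forall>x. f x \<le> Liminf (at x) f)"

text \<open>Frechet subdifferential: f x finite and
  liminf_{y\<rightarrow>x, y\<noteq>x} (f y - f x - <p, y-x>)/||y-x|| \<ge> 0, written in epsilon-delta form.\<close>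
definition frechet_subdiff :: "('a::real_inner \<Rightarrow> ereal) \<Rightarrow> 'a \<Rightarrow> 'a set" where
  "frechet_subdiff f x = {p. \<bar>f x\<bar> \<noteq> \<infinity> \<and>
     (\<forall>e>0. \<exists>d>0. \<forall>y. norm (y - x) < d \<longrightarrow>
        f x + ereal (p \<bullet> (y - x) - e * norm (y - x)) \<le> f y)}"

definition limiting_subdiff :: "('a::real_inner \<Rightarrow> ereal) \<Rightarrow> 'a \<Rightarrow> 'a set" where
  "limiting_subdiff f x = {p. \<exists>xs ps. xs \<longlonglongrightarrow> x \<and> (\<lambda>n. f (xs n)) \<longlonglongrightarrow> f x \<and>
       (\<forall>n. ps n \<in> frechet_subdiff f (xs n)) \<and> ps \<longlonglongrightarrow> p}"

text \<open>Lazy slope: inf of norms of subgradients, +\<infinity> if the subdifferential is empty.\<close>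
definition lazy_slope :: "('a::real_inner \<Rightarrow> ereal) \<Rightarrow> 'a \<Rightarrow> ereal" where
  "lazy_slope f x = Inf ((\<lambda>p. ereal (norm p)) ` limiting_subdiff f x)"

definition desingularizing :: "(real \<Rightarrow> real) \<Rightarrow> real \<Rightarrow> bool" where
  "desingularizing \<phi> \<eta> \<longleftrightarrow> 0 < \<eta> \<and>
     continuous_on {0..<\<eta>} \<phi> \<and> concave_on {0..<\<eta>} \<phi> \<and> \<phi> 0 = 0 \<and>
     (\<forall>s\<in>{0..<\<eta>}. 0 \<le> \<phi> s) \<and>
     (\<forall>s\<in>{0<..<\<eta>}. \<phi> differentiable at s) \<and>
     continuous_on {0<..<\<eta>} (deriv \<phi>) \<and>
     (\<forall>s\<in>{0<..<\<eta>}. 0 < deriv \<phi> s)"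

definition Gamma_set :: "('a::real_normed_vector \<Rightarrow> ereal) \<Rightarrow> 'a \<Rightarrow> real \<Rightarrow> real \<Rightarrow> 'a set" where
  "Gamma_set f xs \<eta> \<delta> = {x. norm (x - xs) < \<delta> \<and> f xs < f x \<and> f x < f xs + ereal \<eta>}"

definition Gamma_low_set :: "('a::real_normed_vector \<Rightarrow> ereal) \<Rightarrow> 'a \<Rightarrow> real \<Rightarrow> real \<Rightarrow> 'a set" where
  "Gamma_low_set f xs \<eta> \<delta> = {x. norm (x - xs) < \<delta> \<and> f xs \<le> f x \<and> f x < f xs + ereal \<eta>}"

definition KL_at :: "('a::real_inner \<Rightarrow> ereal) \<Rightarrow> 'a \<Rightarrow> (real \<Rightarrow> real) \<Rightarrow> real \<Rightarrow> real \<Rightarrow> bool" where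
  "KL_at f xs \<phi> \<eta> \<delta> \<longleftrightarrow> limiting_subdiff f xs \<noteq> {} \<and> 0 < \<delta> \<and> desingularizing \<phi> \<eta> \<and>
     (\<forall>x\<in>Gamma_set f xs \<eta> \<delta>.
        1 \<le> ereal (deriv \<phi> (real_of_ereal (f x - f xs))) * lazy_slope f x)"

end

theory Submission
  imports Defs
begin

lemma tangent:
  assumes "desingularizing \<phi> \<eta>" "c \<in> {0<..<\<eta>}" "y \<in> {0..<\<eta>}"
  shows "\<phi> y \<le> \<phi> c + deriv \<phi> c * (y - c)"
proof -
  have cv: "convex_on {0..<\<eta>} (\<lambda>x. - \<phi> x)" using assms(1) unfolding desingularizing_def concave_on_def by auto
  have "\<phi> differentiable at c" using assms unfolding desingularizing_def by auto
  hence dd0: "(\<phi> has_field_derivative deriv \<phi> c) (at c)" using DERIV_deriv_iff_real_differentiable by blast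
  have d: "((\<lambda>x. - \<phi> x) has_field_derivative - deriv \<phi> c) (at c within {0..<\<eta>})"
    using DERIV_minus[OF dd0] by (rule has_field_derivative_at_within)
  have "{0<..<\<eta>} \<subseteq> interior {0..<\<eta>}" by (rule interior_maximal) auto
  hence i: "c \<in> interior {0..<\<eta>}" using assms(2) by blast
  have cn: "connected {0..<(\<eta>::real)}" by (rule convex_connected) (rule convex_real_interval)
  have "- \<phi> y - - \<phi> c \<ge> - deriv \<phi> c * (y - c)"
    by (rule convex_on_imp_above_tangent[OF cv cn i assms(3) d])
  thus ?thesis by simp
qed

lemma am_gm2:
  fixes d D E :: real
  assumes "0 \<le> d" "0 \<le> D" "0 \<le> E" "d^2 \<le> D * E"
  shows "2 * d \<le> D + E"
proof -
  have e: "(D+E)^2 = (D-E)^2 + 4*(D*E)" by (simp add: power2_eq_square algebra_simps)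
  have "(2*d)^2 = 4 * d^2" by (simp add: power2_eq_square)
  also have "\<dots> \<le> 4*(D*E)" using assms(4) by simp
  also have "\<dots> \<le> (D+E)^2" unfolding e by simp
  finally have "(2*d)^2 \<le> (D+E)^2" .
  thus ?thesis using assms power2_le_imp_le[of "2*d" "D+E"] by simp
qed

theorem mainTheorem7:
  fixes f :: "'a::{real_inner, complete_space} \<Rightarrow> ereal"
    and xs :: 'a and x :: "nat \<Rightarrow> 'a"
    and \<phi> :: "real \<Rightarrow> real" and \<eta> \<delta> :: real
    and a b \<epsilon> :: "nat \<Rightarrow> real" and k :: nat
  assumes "proper_fun f" and "lsc_fun f"
    and "KL_at f xs \<phi> \<eta> \<delta>"
    and H1: "\<And>k. f (x (Suc k)) + ereal (a k * (norm (x (Suc k) - x k))\<^sup>2) \<le> f (x k) \<and> 0 < a k"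
    and H2: "\<And>k. ereal (b (Suc k)) * lazy_slope f (x (Suc k))
                 \<le> ereal (norm (x (Suc k) - x k) + \<epsilon> (Suc k))
               \<and> 0 < b (Suc k) \<and> 0 \<le> \<epsilon> (Suc k)"
    and "1 \<le> k"
    and "x k \<in> Gamma_low_set f xs \<eta> \<delta>" and "x (Suc k) \<in> Gamma_low_set f xs \<eta> \<delta>"
  shows "2 * norm (x (Suc k) - x k)
     \<le> norm (x k - x (k - 1))
        + (1 / (a k * b k)) * (\<phi> (real_of_ereal (f (x k) - f xs))
                              - \<phi> (real_of_ereal (f (x (Suc k)) - f xs)))
        + \<epsilon> k"
proof -
  have G1: "f xs \<le> f (x k)" "f (x k) < f xs + ereal \<eta>" "norm (x k - xs) < \<delta>"
    using assms(7) unfolding Gamma_low_set_def by auto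
  have G2: "f xs \<le> f (x (Suc k))" "f (x (Suc k)) < f xs + ereal \<eta>"
    using assms(8) unfolding Gamma_low_set_def by auto
  have nm: "f xs \<noteq> -\<infinity>" using assms(1) unfolding proper_fun_def by auto
  have np: "f xs \<noteq> \<infinity>" using G1 by auto
  obtain F where F: "f xs = ereal F" using nm np by (cases "f xs") auto
  obtain fk where fk: "f (x k) = ereal fk" using G1 F by (cases "f (x k)") auto
  obtain fk1 where fk1: "f (x (Suc k)) = ereal fk1" using G2 F by (cases "f (x (Suc k))") auto
  define d where "d = norm (x (Suc k) - x k)"
  define D where "D = norm (x k - x (k - 1)) + \<epsilon> k"
  define rk where "rk = fk - F"
  define rk1 where "rk1 = fk1 - F"
  have kk: "Suc (k - 1) = k" using assms(6) by simp
  have h1: "fk1 + a k * d^2 \<le> fk" "0 < a k" using H1[of k] fk fk1 d_def by auto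
  have h2: "ereal (b k) * lazy_slope f (x k) \<le> ereal D" "0 < b k" "0 \<le> \<epsilon> k"
    using H2[of "k - 1"] unfolding kk D_def by auto
  have ad0: "0 \<le> a k * d^2" using h1(2) by simp
  have r: "0 \<le> rk1" "rk1 \<le> rk" "rk < \<eta>" "0 \<le> rk"
    using G1 G2 F fk fk1 h1(1) ad0 unfolding rk_def rk1_def by auto
  have r2: "rk1 + a k * d^2 \<le> rk" using h1 unfolding rk_def rk1_def by simp
  have eq1: "real_of_ereal (f (x k) - f xs) = rk" using fk F rk_def by simp
  have eq2: "real_of_ereal (f (x (Suc k)) - f xs) = rk1" using fk1 F rk1_def by simp
  have D0: "0 \<le> D" using h2 D_def by simp
  have d0: "0 \<le> d" using d_def by simp
  show ?thesis
  proof (cases "rk1 = rk")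
    case True
    then have "a k * d^2 \<le> 0" using r2 by simp
    hence "d^2 \<le> 0" using h1(2) by (simp add: mult_le_0_iff)
    hence "d = 0" by simp
    thus ?thesis using True eq1 eq2 h2 d_def by simp
  next
    case False
    hence pos: "0 < rk" "rk1 < rk" using r by auto
    have des: "desingularizing \<phi> \<eta>" and KL: "\<forall>y\<in>Gamma_set f xs \<eta> \<delta>.
        1 \<le> ereal (deriv \<phi> (real_of_ereal (f y - f xs))) * lazy_slope f y"
      using assms(3) unfolding KL_at_def by auto
    have "x k \<in> Gamma_set f xs \<eta> \<delta>" using G1 F fk pos unfolding Gamma_set_def rk_def by auto
    hence kl: "1 \<le> ereal (deriv \<phi> rk) * lazy_slope f (x k)" using KL eq1 by auto
    have s0: "0 \<le> lazy_slope f (x k)" unfolding lazy_slope_def by (auto intro: Inf_greatest)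
    have "lazy_slope f (x k) \<noteq> \<infinity>"
    proof
      assume "lazy_slope f (x k) = \<infinity>"
      hence e: "ereal (b k) * lazy_slope f (x k) = \<infinity>" using h2(2) by simp
      have "\<infinity> \<le> ereal D" using h2(1) unfolding e .
      thus False by simp
    qed
    then obtain s where s: "lazy_slope f (x k) = ereal s" "0 \<le> s" using s0 by (cases "lazy_slope f (x k)") auto
    have p0: "0 < deriv \<phi> rk" using des pos r unfolding desingularizing_def by auto
    have kl': "1 \<le> deriv \<phi> rk * s" using kl s by simp
    have bs: "b k * s \<le> D" using h2(1) s by simp
    have "b k \<le> b k * (deriv \<phi> rk * s)" using kl' h2(2) by simp
    also have "\<dots> = deriv \<phi> rk * (b k * s)" by simp
    also have "\<dots> \<le> deriv \<phi> rk * D" using bs p0 by simp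
    finally have bD: "b k \<le> deriv \<phi> rk * D" .
    have tg: "\<phi> rk1 \<le> \<phi> rk + deriv \<phi> rk * (rk1 - rk)"
      using tangent[OF des] pos r by auto
    define \<Delta> where "\<Delta> = \<phi> rk - \<phi> rk1"
    have "deriv \<phi> rk * (a k * d^2) \<le> deriv \<phi> rk * (rk - rk1)" using r2 p0 by simp
    also have "\<dots> \<le> \<Delta>" using tg \<Delta>_def by (simp add: algebra_simps)
    finally have dd: "deriv \<phi> rk * (a k * d^2) \<le> \<Delta>" .
    have "a k * b k * d^2 = (a k * d^2) * b k" by simp
    also have "\<dots> \<le> (a k * d^2) * (deriv \<phi> rk * D)" using bD ad0 by (rule mult_left_mono)
    also have "\<dots> = (deriv \<phi> rk * (a k * d^2)) * D" by simp
    also have "\<dots> \<le> \<Delta> * D" using dd D0 by (rule mult_right_mono)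
    finally have key: "a k * b k * d^2 \<le> \<Delta> * D" .
    have ab: "0 < a k * b k" using h1(2) h2(2) by simp
    define E where "E = \<Delta> / (a k * b k)"
    have Dl0: "0 \<le> \<Delta>" using dd p0 ad0 by (meson mult_nonneg_nonneg less_imp_le order_trans)
    have E0: "0 \<le> E" using Dl0 ab E_def by simp
    have "d^2 \<le> D * E" using key ab unfolding E_def by (simp add: field_simps)
    hence "2 * d \<le> D + E" using am_gm2 d0 D0 E0 by blast
    moreover have "E = (1 / (a k * b k)) * (\<phi> rk - \<phi> rk1)" unfolding E_def \<Delta>_def by simp
    ultimately have g: "2 * d \<le> norm (x k - x (k - 1)) + (1 / (a k * b k)) * (\<phi> rk - \<phi> rk1) + \<epsilon> k"
      unfolding D_def by linarith
    show ?thesis using g unfolding eq1 eq2 d_def .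
  qed
qed

end
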